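(* Let $X$ be a finite set with $|X|\ge 3$, let $T\in B(X)$, and let $\mathcal T$ be a minimal triplet cover of $T$. Then $|\mathcal T|\le 3(|X|-2)$.
   Context: A binary phylogenetic $X$-tree is an unrooted tree whose leaf set is $X$ and all of whose non-leaf vertices are unlabelled of degree three; $B(X)$ is the set of such trees. Pairs in $\binom{X}{2}$ are written $ab$, triples $abc$. Given $\mathcal T\subseteq\binom{X}{2}$, a triple $abc$ supports an interior vertex $v$ if $a,b,c$ lie one in each of the three components of $T$ minus $v$ and $ab,ac,bc\in\mathcal T$; $\mathcal T$ is a triplet cover for $T$ if every interior vertex is supported by some triple. A triplet cover $\mathcal T$ is minimal if $\mathcal T-\{ab\}$ is not a triplet cover for $T$ for any $ab\in\mathcal T$. *)

theory Defs
  imports Main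
begin

definition simple_graph :: "'v set \<Rightarrow> 'v set set \<Rightarrow> bool" where
  "simple_graph V E \<longleftrightarrow> finite V \<and>
     (\<forall>e\<in>E. \<exists>u w. e = {u, w} \<and> u \<noteq> w \<and> u \<in> V \<and> w \<in> V)"

definition connected_in :: "'v set set \<Rightarrow> 'v set \<Rightarrow> 'v \<Rightarrow> 'v \<Rightarrow> bool" where
  "connected_in E W u w \<longleftrightarrow>
     (\<lambda>x y. {x, y} \<in> E \<and> x \<in> W \<and> y \<in> W)\<^sup>*\<^sup>* u w"

definition degree :: "'v set set \<Rightarrow> 'v \<Rightarrow> nat" where
  "degree E v = card {e \<in> E. v \<in> e}"

(* a tree: nonempty, connected, and acyclic (no edge lies on a cycle, i.e. the
   endpoints of each edge are disconnected once that edge is removed) *)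
definition is_tree :: "'v set \<Rightarrow> 'v set set \<Rightarrow> bool" where
  "is_tree V E \<longleftrightarrow> simple_graph V E \<and> V \<noteq> {} \<and>
     (\<forall>u\<in>V. \<forall>w\<in>V. connected_in E V u w) \<and>
     (\<forall>u w. {u, w} \<in> E \<longrightarrow> \<not> connected_in (E - {{u, w}}) V u w)"

definition binary_phylo_tree :: "'a set \<Rightarrow> 'v set \<Rightarrow> 'v set set \<Rightarrow> ('a \<Rightarrow> 'v) \<Rightarrow> bool" where
  "binary_phylo_tree X V E \<phi> \<longleftrightarrow> is_tree V E \<and>
     bij_betw \<phi> X {v \<in> V. degree E v = 1} \<and>
     (\<forall>v\<in>V. degree E v = 1 \<or> degree E v = 3)"

definition interior :: "'v set \<Rightarrow> 'v set set \<Rightarrow> 'v set" where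
  "interior V E = {v \<in> V. degree E v \<noteq> 1}"

definition supports ::
  "'a set set \<Rightarrow> 'v set \<Rightarrow> 'v set set \<Rightarrow> ('a \<Rightarrow> 'v) \<Rightarrow> 'a \<Rightarrow> 'a \<Rightarrow> 'a \<Rightarrow> 'v \<Rightarrow> bool" where
  "supports \<T> V E \<phi> a b c v \<longleftrightarrow>
     \<not> connected_in E (V - {v}) (\<phi> a) (\<phi> b) \<and>
     \<not> connected_in E (V - {v}) (\<phi> a) (\<phi> c) \<and>
     \<not> connected_in E (V - {v}) (\<phi> b) (\<phi> c) \<and>
     {a, b} \<in> \<T> \<and> {a, c} \<in> \<T> \<and> {b, c} \<in> \<T>"

definition triplet_cover ::
  "'a set \<Rightarrow> 'a set set \<Rightarrow> 'v set \<Rightarrow> 'v set set \<Rightarrow> ('a \<Rightarrow> 'v) \<Rightarrow> bool" where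
  "triplet_cover X \<T> V E \<phi> \<longleftrightarrow>
     \<T> \<subseteq> {p. p \<subseteq> X \<and> card p = 2} \<and>
     (\<forall>v\<in>interior V E. \<exists>a b c. supports \<T> V E \<phi> a b c v)"

definition minimal_triplet_cover ::
  "'a set \<Rightarrow> 'a set set \<Rightarrow> 'v set \<Rightarrow> 'v set set \<Rightarrow> ('a \<Rightarrow> 'v) \<Rightarrow> bool" where
  "minimal_triplet_cover X \<T> V E \<phi> \<longleftrightarrow>
     triplet_cover X \<T> V E \<phi> \<and>
     (\<forall>p\<in>\<T>. \<not> triplet_cover X (\<T> - {p}) V E \<phi>)"

end

theory Submission
  imports Defs
begin

lemma conn_mono:
  assumes "E \<subseteq> E'" "connected_in E W a b" shows "connected_in E' W a b"
  using assms(2) unfolding connected_in_def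
  by (rule rtranclp_mono[THEN predicate2D, rotated]) (use assms(1) in auto)

lemma conn_sym:
  assumes "connected_in E W a b" shows "connected_in E W b a"
  using assms unfolding connected_in_def
proof (induction rule: rtranclp_induct)
  case base then show ?case by simp
next
  case (step y z)
  have "{z, y} \<in> E" using step(2) by (simp add: insert_commute)
  then have "(\<lambda>x y. {x, y} \<in> E \<and> x \<in> W \<and> y \<in> W) z y" using step(2) by simp
  from converse_rtranclp_into_rtranclp[OF this step(3)] show ?case .
qed

lemma conn_step:
  assumes "connected_in E W a b" "{b, c} \<in> E" "b \<in> W" "c \<in> W"
  shows "connected_in E W a c"
  using assms unfolding connected_in_def
  by (metis (mono_tags, lifting) rtranclp.rtrancl_into_rtrancl)

lemma conn_split:
  assumes "connected_in E W r x" "e = {u, w}"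
  shows "connected_in (E - {e}) W r x \<or> connected_in (E - {e}) W r u
       \<or> connected_in (E - {e}) W r w"
  using assms(1) unfolding connected_in_def
proof (induction rule: rtranclp_induct)
  case base then show ?case by simp
next
  case (step y z)
  show ?case
  proof (cases "{y, z} = e")
    case True
    then have "y = u \<or> y = w" using assms(2) by (auto simp: doubleton_eq_iff)
    then show ?thesis using step(3) by auto
  next
    case False
    then have yz: "(\<lambda>x y. {x, y} \<in> E - {e} \<and> x \<in> W \<and> y \<in> W) y z" using step(2) by auto
    have "(\<lambda>x y. {x, y} \<in> E - {e} \<and> x \<in> W \<and> y \<in> W)\<^sup>*\<^sup>* r y \<Longrightarrow> ?thesis"
      using rtranclp.rtrancl_into_rtrancl[of "\<lambda>x y. {x, y} \<in> E - {e} \<and> x \<in> W \<and> y \<in> W" r y z, OF _ yz] by blast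
    then show ?thesis using step(3) by blast
  qed
qed

lemma tree_edges:
  assumes "is_tree V E"
  shows "finite E \<and> card E + 1 \<le> card V"
proof -
  have sg: "finite V" "\<forall>e\<in>E. \<exists>u w. e = {u, w} \<and> u \<noteq> w \<and> u \<in> V \<and> w \<in> V"
    using assms unfolding is_tree_def simple_graph_def by auto
  have conn: "\<And>u w. u \<in> V \<Longrightarrow> w \<in> V \<Longrightarrow> connected_in E V u w"
    and acyc: "\<And>u w. {u, w} \<in> E \<Longrightarrow> \<not> connected_in (E - {{u, w}}) V u w"
    using assms unfolding is_tree_def by auto
  obtain r where r: "r \<in> V" using assms unfolding is_tree_def by auto
  have esub: "e \<subseteq> V" if he: "e \<in> E" for e
  proof -
    obtain u w where uw: "e = {u, w}" "u \<noteq> w" "u \<in> V" "w \<in> V" using bspec[OF sg(2) he] by blast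
    then show ?thesis by simp
  qed
  have finE: "finite E"
    by (rule finite_subset[of _ "Pow V"]) (use sg(1) esub in auto)
  have other: "\<exists>y. e = {x, y} \<and> x \<noteq> y \<and> y \<in> V" if he: "e \<in> E" "x \<in> e" for e x
  proof -
    obtain u w where uw: "e = {u, w}" "u \<noteq> w" "u \<in> V" "w \<in> V" using bspec[OF sg(2) he(1)] by blast
    show ?thesis
    proof (cases "x = u")
      case True then show ?thesis using uw by blast
    next
      case False then have "x = w" using uw he(2) by blast
      then show ?thesis using uw by (auto simp: insert_commute)
    qed
  qed
  define f where "f e = (SOME x. x \<in> e \<and> \<not> connected_in (E - {e}) V r x)" for e
  have fex: "f e \<in> e \<and> \<not> connected_in (E - {e}) V r (f e)" if he: "e \<in> E" for e
  proof -
    obtain u w where uw: "e = {u, w}" "u \<noteq> w" "u \<in> V" "w \<in> V" using bspec[OF sg(2) he] by blast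
    have "\<not> (connected_in (E - {e}) V r u \<and> connected_in (E - {e}) V r w)"
    proof
      assume h: "connected_in (E - {e}) V r u \<and> connected_in (E - {e}) V r w"
      have "connected_in (E - {e}) V u r" using conn_sym[OF h[THEN conjunct1]] .
      then have c: "connected_in (E - {e}) V u w"
        using h[THEN conjunct2] unfolding connected_in_def by (rule rtranclp_trans)
      have "{u, w} \<in> E" using he uw(1) by simp
      from acyc[OF this] have "\<not> connected_in (E - {e}) V u w" using uw(1) by simp
      then show False using c by contradiction
    qed
    then have "\<exists>x. x \<in> e \<and> \<not> connected_in (E - {e}) V r x" using uw(1) by auto
    then show ?thesis unfolding f_def by (rule someI_ex)
  qed
  have fV: "f e \<in> V - {r}" if "e \<in> E" for e
  proof -
    have "f e \<in> V" using fex[OF that] esub[OF that] by blast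
    moreover have "f e \<noteq> r"
    proof
      assume "f e = r"
      moreover have "connected_in (E - {e}) V r r" unfolding connected_in_def by simp
      ultimately show False using fex[OF that] by simp
    qed
    ultimately show ?thesis by simp
  qed
  have near: "connected_in (E - {e}) V r y" if "e \<in> E" "e = {f e, y}" for e y
  proof -
    have "f e \<in> V" using fV that by blast
    then have "connected_in E V r (f e)" using conn r by blast
    from conn_split[OF this that(2)] show ?thesis using fex[OF that(1)] by blast
  qed
  have inj: "inj_on f E"
  proof
    fix e1 e2 assume e1: "e1 \<in> E" and e2: "e2 \<in> E" and eq: "f e1 = f e2"
    show "e1 = e2"
    proof (rule ccontr)
      assume ne: "e1 \<noteq> e2"
      define x where "x = f e1"
      have fx1: "f e1 = x" by (simp add: x_def)
      have fx2: "f e2 = x" using eq by (simp add: x_def)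
      have xe1: "x \<in> e1" using fex[OF e1] fx1 by simp
      have xe2: "x \<in> e2" using fex[OF e2] fx2 by simp
      obtain y1 where y1: "e1 = {x, y1}" "x \<noteq> y1" "y1 \<in> V" using other[OF e1 xe1] by blast
      obtain y2 where y2: "e2 = {x, y2}" "x \<noteq> y2" "y2 \<in> V" using other[OF e2 xe2] by blast
      have xV: "x \<in> V" using esub[OF e1] xe1 by blast
      have n1: "\<not> connected_in (E - {e1}) V r x" using fex[OF e1] unfolding fx1 by blast
      have n2: "\<not> connected_in (E - {e2}) V r x" using fex[OF e2] unfolding fx2 by blast
      have "e1 = {f e1, y1}" unfolding fx1 by (rule y1(1))
      from near[OF e1 this] have c1: "connected_in (E - {e1}) V r y1" .
      have "connected_in (E - {e1} - {e2}) V r y1 \<or> connected_in (E - {e1} - {e2}) V r x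
          \<or> connected_in (E - {e1} - {e2}) V r y2"
        using conn_split[OF c1 y2(1)] .
      moreover
      { assume h: "connected_in (E - {e1} - {e2}) V r y1"
        then have "connected_in (E - {e2}) V r y1" by (rule conn_mono[rotated]) auto
        moreover have "{y1, x} \<in> E - {e2}" using e1 y1 ne by (auto simp: insert_commute)
        ultimately have "connected_in (E - {e2}) V r x" using conn_step[OF _ _ y1(3) xV] by blast
        with n2 have False by simp }
      moreover
      { assume h: "connected_in (E - {e1} - {e2}) V r x"
        then have "connected_in (E - {e1}) V r x" by (rule conn_mono[rotated]) auto
        with n1 have False by simp }
      moreover
      { assume h: "connected_in (E - {e1} - {e2}) V r y2"
        then have "connected_in (E - {e1}) V r y2" by (rule conn_mono[rotated]) auto
        moreover have "{y2, x} \<in> E - {e1}" using e2 y2 ne by (auto simp: insert_commute)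
        ultimately have "connected_in (E - {e1}) V r x" using conn_step[OF _ _ y2(3) xV] by blast
        with n1 have False by simp }
      ultimately show False by blast
    qed
  qed
  have img: "f ` E \<subseteq> V - {r}" using fV by (rule image_subsetI)
  have "card E \<le> card (V - {r})"
    by (rule card_inj_on_le[OF inj img]) (simp add: sg(1))
  moreover have "card (V - {r}) = card V - 1" using r sg(1) by simp
  moreover have "card V \<noteq> 0" using r sg(1) by (auto simp add: card_eq_0_iff)
  ultimately show ?thesis using finE by linarith
qed

lemma degree_sum:
  assumes "finite V" "finite E" "\<forall>e\<in>E. \<exists>u w. e = {u, w} \<and> u \<noteq> w \<and> u \<in> V \<and> w \<in> V"
  shows "(\<Sum>v\<in>V. degree E v) = 2 * card E"
proof -
  have "(\<Sum>v\<in>V. degree E v) = (\<Sum>v\<in>V. \<Sum>e\<in>E. if v \<in> e then 1 else 0)"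
    unfolding degree_def using assms(2) by (simp add: sum.inter_filter[symmetric])
  also have "\<dots> = (\<Sum>e\<in>E. \<Sum>v\<in>V. if v \<in> e then 1 else 0)" by (rule sum.swap)
  also have "\<dots> = (\<Sum>e\<in>E. 2)"
  proof (rule sum.cong)
    fix e assume "e \<in> E"
    then obtain u w where "e = {u, w}" "u \<noteq> w" "u \<in> V" "w \<in> V" using assms(3) by blast
    then have "V \<inter> e = {u, w}" by auto
    then show "(\<Sum>v\<in>V. if v \<in> e then 1 else 0) = (2::nat)"
      using assms(1) \<open>u \<noteq> w\<close> by (simp add: sum.If_cases)
  qed simp
  finally show ?thesis by simp
qed

lemma card3: "card {x, y, z} \<le> 3"
  by (simp add: card_insert_if)

theorem corollary1:
  fixes X :: "'a set" and V :: "'v set" and E :: "'v set set"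
    and \<phi> :: "'a \<Rightarrow> 'v" and \<T> :: "'a set set"
  assumes "finite X" and "card X \<ge> 3"
    and "binary_phylo_tree X V E \<phi>"
    and "minimal_triplet_cover X \<T> V E \<phi>"
  shows "card \<T> \<le> 3 * (card X - 2)"
proof -
  have tree: "is_tree V E" using assms(3) unfolding binary_phylo_tree_def by simp
  have sg: "finite V" "\<forall>e\<in>E. \<exists>u w. e = {u, w} \<and> u \<noteq> w \<and> u \<in> V \<and> w \<in> V"
    using tree unfolding is_tree_def simple_graph_def by auto
  from tree_edges[OF tree] have finE: "finite E" and cE: "card E + 1 \<le> card V" by auto
  define L where "L = {v \<in> V. degree E v = 1}"
  define I where "I = interior V E"
  have cL: "card L = card X"
    using assms(3) unfolding binary_phylo_tree_def L_def by (metis bij_betw_same_card)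
  have I3: "\<forall>v\<in>I. degree E v = 3"
    using assms(3) unfolding binary_phylo_tree_def I_def interior_def by auto
  have VLI: "V = L \<union> I" "L \<inter> I = {}" unfolding L_def I_def interior_def by auto
  have finL: "finite L" and finI: "finite I" using sg(1) VLI by auto
  have "(\<Sum>v\<in>V. degree E v) = (\<Sum>v\<in>L. degree E v) + (\<Sum>v\<in>I. degree E v)"
    using VLI finL finI by (simp add: sum.union_disjoint)
  also have "\<dots> = card L + 3 * card I" using I3 by (simp add: L_def)
  finally have "card L + 3 * card I = 2 * card E" using degree_sum[OF sg(1) finE sg(2)] by simp
  moreover have "card V = card L + card I" using VLI finL finI by (simp add: card_Un_disjoint)
  ultimately have cI: "card I + 2 \<le> card X" using cE cL by linarith
  have tc: "triplet_cover X \<T> V E \<phi>" and minl: "\<forall>p\<in>\<T>. \<not> triplet_cover X (\<T> - {p}) V E \<phi>"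
    using assms(4) unfolding minimal_triplet_cover_def by auto
  have "\<forall>v\<in>I. \<exists>a b c. supports \<T> V E \<phi> a b c v" using tc unfolding triplet_cover_def I_def by simp
  then obtain A B C where ABC: "\<forall>v\<in>I. supports \<T> V E \<phi> (A v) (B v) (C v) v" by metis
  define P where "P v = {{A v, B v}, {A v, C v}, {B v, C v}}" for v
  have sub: "\<T> \<subseteq> (\<Union>v\<in>I. P v)"
  proof
    fix p assume p: "p \<in> \<T>"
    have "\<T> - {p} \<subseteq> {p. p \<subseteq> X \<and> card p = 2}" using tc unfolding triplet_cover_def by auto
    moreover have "\<not> triplet_cover X (\<T> - {p}) V E \<phi>" using minl p by blast
    ultimately have "\<not> (\<forall>v\<in>I. \<exists>a b c. supports (\<T> - {p}) V E \<phi> a b c v)"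
      unfolding triplet_cover_def I_def by blast
    then obtain v where v: "v \<in> I" "\<forall>a b c. \<not> supports (\<T> - {p}) V E \<phi> a b c v"
      by blast
    have "p \<in> P v"
    proof (rule ccontr)
      assume np: "p \<notin> P v"
      have s: "supports \<T> V E \<phi> (A v) (B v) (C v) v" using ABC v(1) by blast
      have "{A v, B v} \<noteq> p" "{A v, C v} \<noteq> p" "{B v, C v} \<noteq> p" using np unfolding P_def by auto
      then have "supports (\<T> - {p}) V E \<phi> (A v) (B v) (C v) v"
        using s unfolding supports_def by blast
      with v(2) show False by blast
    qed
    then show "p \<in> (\<Union>v\<in>I. P v)" using v(1) by blast
  qed
  have "card \<T> \<le> card (\<Union>v\<in>I. P v)"
    by (rule card_mono[OF _ sub]) (use finI P_def in auto)
  also have "\<dots> \<le> (\<Sum>v\<in>I. card (P v))" by (rule card_UN_le[OF finI])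
  also have "\<dots> \<le> (\<Sum>v\<in>I. 3)" by (rule sum_mono) (simp add: P_def card3)
  also have "\<dots> = 3 * card I" by simp
  finally show ?thesis using cI by linarith
qed

end
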